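(* Let $G$ be a compactly generated t.d.l.c. group and $(K,S)$ a generating pair of $G$. If there exists a proper almost $(G,K)$-invariant set $B\subseteq G/K$, then $e(G)>1$.
   Context: A generating pair $(K,S)$ consists of a compact open subgroup $K$ and a finite symmetric set $S\subset G\setminus K$ such that $S\cup K$ generates $G$. The rough Cayley graph $\Gamma(G,K,S)$ has vertex set $G/K$ and an edge joining $gK$ and $gsK$ for all $g\in G$, $s\in S$. The number of ends of a connected locally finite graph is the supremum over finite vertex sets $F$ of the number of infinite components after deleting $F$ and incident edges; $e(G)$ is the number of ends of a rough Cayley graph of $G$. A subset $B\subseteq G/K$ is almost $(G,K)$-invariant if $kB=B$ for all $k\in K$ and the symmetric difference $gB\,\triangle\,B$ is finite for all $g\in G$; it is proper if both $B$ and its complement $G/K\setminus B$ are infinite. *)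

theory Defs
  imports "HOL-Analysis.Analysis"
begin

text \<open>The group G is a type of class topological_group_add (a possibly
non-commutative group, written additively) which is Hausdorff.\<close>

definition is_subgroup :: "'g::group_add set \<Rightarrow> bool" where
  "is_subgroup H \<longleftrightarrow> 0 \<in> H \<and> (\<forall>x\<in>H. \<forall>y\<in>H. x + y \<in> H) \<and> (\<forall>x\<in>H. - x \<in> H)"

definition gen_subgroup :: "'g::group_add set \<Rightarrow> 'g set" where
  "gen_subgroup A = \<Inter>{H. is_subgroup H \<and> A \<subseteq> H}"

definition totally_disconnected_group :: "'g::topological_space itself \<Rightarrow> bool" where
  "totally_disconnected_group _ \<longleftrightarrow> (\<forall>x::'g. connected_component_set UNIV x = {x})"

definition tdlc :: "'g::{topological_group_add,t2_space} itself \<Rightarrow> bool" where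
  "tdlc T \<longleftrightarrow> totally_disconnected_group T \<and> locally_compact_space (euclidean :: 'g topology)"

definition compactly_generated :: "'g::{topological_group_add} itself \<Rightarrow> bool" where
  "compactly_generated _ \<longleftrightarrow> (\<exists>C::'g set. compact C \<and> gen_subgroup C = UNIV)"

definition generating_pair :: "'g::topological_group_add set \<Rightarrow> 'g set \<Rightarrow> bool" where
  "generating_pair K S \<longleftrightarrow> is_subgroup K \<and> compact K \<and> open K \<and>
     finite S \<and> uminus ` S = S \<and> S \<inter> K = {} \<and> gen_subgroup (S \<union> K) = UNIV"

definition lcoset :: "'g::group_add \<Rightarrow> 'g set \<Rightarrow> 'g set" where
  "lcoset g K = (\<lambda>k. g + k) ` K"

definition cosets :: "'g::group_add set \<Rightarrow> 'g set set" where
  "cosets K = range (\<lambda>g. lcoset g K)"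

definition act :: "'g::group_add \<Rightarrow> 'g set \<Rightarrow> 'g set" where
  "act g C = (\<lambda>x. g + x) ` C"

definition set_act :: "'g::group_add \<Rightarrow> 'g set set \<Rightarrow> 'g set set" where
  "set_act g B = act g ` B"

definition rc_edge :: "'g::group_add set \<Rightarrow> 'g set \<Rightarrow> 'g set \<Rightarrow> 'g set \<Rightarrow> bool" where
  "rc_edge K S x y \<longleftrightarrow> (\<exists>g s. s \<in> S \<and> x = lcoset g K \<and> y = lcoset (g + s) K)"

definition comps_after_removal :: "'v set \<Rightarrow> ('v \<Rightarrow> 'v \<Rightarrow> bool) \<Rightarrow> 'v set \<Rightarrow> 'v set set" where
  "comps_after_removal V E F =
     {C. \<exists>v \<in> V - F. C = {w. (\<lambda>a b. a \<in> V - F \<and> b \<in> V - F \<and> E a b)\<^sup>*\<^sup>* v w}}"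

definition ecard :: "'a set \<Rightarrow> enat" where
  "ecard A = (if finite A then enat (card A) else \<infinity>)"

definition num_ends :: "'v set \<Rightarrow> ('v \<Rightarrow> 'v \<Rightarrow> bool) \<Rightarrow> enat" where
  "num_ends V E = (SUP F \<in> {F. finite F \<and> F \<subseteq> V}.
       ecard {C \<in> comps_after_removal V E F. infinite C})"

definition almost_invariant :: "'g::group_add set \<Rightarrow> 'g set set \<Rightarrow> bool" where
  "almost_invariant K B \<longleftrightarrow> B \<subseteq> cosets K \<and> (\<forall>k\<in>K. set_act k B = B) \<and>
     (\<forall>g. finite ((set_act g B - B) \<union> (B - set_act g B)))"

definition proper_set :: "'g::group_add set \<Rightarrow> 'g set set \<Rightarrow> bool" where
  "proper_set K B \<longleftrightarrow> infinite B \<and> infinite (cosets K - B)"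

end

theory Submission
  imports Defs
begin


lemma lcoset_mem: assumes "is_subgroup K" shows "g \<in> lcoset g K"
  using assms unfolding lcoset_def is_subgroup_def by (metis add.right_neutral image_eqI)

lemma lcoset_eq: assumes "is_subgroup K" "h \<in> lcoset g K" shows "lcoset h K = lcoset g K"
proof -
  obtain k where k: "k \<in> K" "h = g + k" using assms(2) unfolding lcoset_def by auto
  have "lcoset h K \<subseteq> lcoset g K"
    using k assms(1) unfolding lcoset_def is_subgroup_def by (auto simp: add.assoc)
  moreover have "lcoset g K \<subseteq> lcoset h K"
  proof
    fix x assume "x \<in> lcoset g K"
    then obtain j where j: "j \<in> K" "x = g + j" unfolding lcoset_def by auto
    have "x = h + (-k + j)" using k j by (simp add: add.assoc[symmetric])
    moreover have "-k + j \<in> K" using k j assms(1) unfolding is_subgroup_def by auto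
    ultimately show "x \<in> lcoset h K" unfolding lcoset_def by auto
  qed
  ultimately show ?thesis by auto
qed

lemma act_lcoset: "act a (lcoset g K) = lcoset (a + g) K"
  unfolding act_def lcoset_def by (auto simp: image_image add.assoc)

lemma open_lcoset:
  fixes K :: "'g::topological_group_add set"
  assumes "open K" shows "open (lcoset g K)"
proof -
  have "lcoset g K = (\<lambda>x. -g + x) -` K"
    unfolding lcoset_def by (auto simp: add.assoc[symmetric] image_iff, metis add.assoc add.right_inverse add_0)
  moreover have "continuous_on UNIV (\<lambda>x::'g. -g + x)" by (intro continuous_intros)
  ultimately show ?thesis using assms by (simp add: open_vimage)
qed

lemma compact_lcoset:
  fixes K :: "'g::topological_group_add set"
  assumes "compact K" shows "compact (lcoset g K)"
  unfolding lcoset_def by (intro compact_continuous_image assms continuous_intros)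

lemma finite_cosets_compact:
  fixes K :: "'g::topological_group_add set"
  assumes "is_subgroup K" "open K" "compact Z"
  shows "finite ((\<lambda>z. lcoset z K) ` Z)"
proof -
  have "Z \<subseteq> \<Union>((\<lambda>z. lcoset z K) ` Z)" using lcoset_mem[OF assms(1)] by auto
  then obtain D where D: "D \<subseteq> (\<lambda>z. lcoset z K) ` Z" "finite D" "Z \<subseteq> \<Union>D"
    using compactE[OF assms(3), of "(\<lambda>z. lcoset z K) ` Z"] open_lcoset[OF assms(2)] by blast
  have "(\<lambda>z. lcoset z K) ` Z \<subseteq> D"
  proof
    fix A assume "A \<in> (\<lambda>z. lcoset z K) ` Z"
    then obtain z where z: "z \<in> Z" "A = lcoset z K" by auto
    then obtain C where C: "C \<in> D" "z \<in> C" using D by auto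
    then obtain w where "C = lcoset w K" using D by auto
    then show "A \<in> D" using lcoset_eq[OF assms(1)] C z by metis
  qed
  then show ?thesis using D finite_subset by auto
qed


lemma edge_cosets: "rc_edge K S x y \<Longrightarrow> x \<in> cosets K \<and> y \<in> cosets K"
  unfolding rc_edge_def cosets_def by auto

lemma edge_sym: assumes "generating_pair K S" "rc_edge K S x y" shows "rc_edge K S y x"
proof -
  obtain g s where gs: "s \<in> S" "x = lcoset g K" "y = lcoset (g + s) K"
    using assms(2) unfolding rc_edge_def by auto
  have "-s \<in> S" using assms(1) gs(1) unfolding generating_pair_def by (metis image_eqI)
  moreover have "x = lcoset ((g + s) + -s) K" using gs by (simp add: add.assoc)
  ultimately show ?thesis using gs unfolding rc_edge_def by blast
qed

lemma edge_act: "rc_edge K S x y \<Longrightarrow> rc_edge K S (act a x) (act a y)"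
  unfolding rc_edge_def by (auto simp: act_lcoset add.assoc[symmetric]) (metis add.assoc)

lemma rt_act: "(rc_edge K S)\<^sup>*\<^sup>* x y \<Longrightarrow> (rc_edge K S)\<^sup>*\<^sup>* (act a x) (act a y)"
proof (induction rule: rtranclp_induct)
  case base then show ?case by simp
next
  case (step y z) then show ?case by (meson edge_act rtranclp.rtrancl_into_rtrancl)
qed

lemma rt_sym_gen: assumes "\<And>x y. R x y \<Longrightarrow> R y x" "R\<^sup>*\<^sup>* x y" shows "R\<^sup>*\<^sup>* y x"
  using assms(2)
proof (induction rule: rtranclp_induct)
  case base then show ?case by simp
next
  case (step y z) then show ?case by (meson assms(1) converse_rtranclp_into_rtranclp)
qed

lemma connected_graph:
  assumes gp: "generating_pair K S" and x: "x \<in> cosets K" and y: "y \<in> cosets K"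
  shows "(rc_edge K S)\<^sup>*\<^sup>* x y"
proof -
  let ?E = "rc_edge K S"
  have sub: "is_subgroup K" using gp unfolding generating_pair_def by auto
  define H where "H = {g. ?E\<^sup>*\<^sup>* (lcoset 0 K) (lcoset g K)}"
  have symE: "\<And>a b. ?E a b \<Longrightarrow> ?E b a" using edge_sym[OF gp] by blast
  have "is_subgroup H"
    unfolding is_subgroup_def
  proof (intro conjI ballI)
    show "0 \<in> H" unfolding H_def by simp
  next
    fix a b assume a: "a \<in> H" and b: "b \<in> H"
    have "?E\<^sup>*\<^sup>* (act a (lcoset 0 K)) (act a (lcoset b K))"
      using b unfolding H_def by (auto intro: rt_act)
    then have "?E\<^sup>*\<^sup>* (lcoset a K) (lcoset (a + b) K)" by (simp add: act_lcoset)
    then show "a + b \<in> H" using a unfolding H_def by auto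
  next
    fix a assume a: "a \<in> H"
    have "?E\<^sup>*\<^sup>* (act (-a) (lcoset 0 K)) (act (-a) (lcoset a K))"
      using a unfolding H_def by (auto intro: rt_act)
    then have "?E\<^sup>*\<^sup>* (lcoset (-a) K) (lcoset 0 K)" by (simp add: act_lcoset)
    then have "?E\<^sup>*\<^sup>* (lcoset 0 K) (lcoset (-a) K)" using rt_sym_gen[of "rc_edge K S", OF symE] by blast
    then show "-a \<in> H" unfolding H_def by blast
  qed
  moreover have "S \<union> K \<subseteq> H"
  proof
    fix g assume "g \<in> S \<union> K"
    then show "g \<in> H"
    proof
      assume "g \<in> S"
      then have "?E (lcoset 0 K) (lcoset (0 + g) K)" unfolding rc_edge_def by blast
      then show ?thesis unfolding H_def by auto
    next
      assume "g \<in> K"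
      then have "g \<in> lcoset 0 K" unfolding lcoset_def by auto
      then have "lcoset g K = lcoset 0 K" using lcoset_eq[OF sub] by blast
      then show ?thesis unfolding H_def by auto
    qed
  qed
  ultimately have "gen_subgroup (S \<union> K) \<subseteq> H" unfolding gen_subgroup_def by auto
  then have H: "H = UNIV" using gp unfolding generating_pair_def by auto
  obtain a b where ab: "x = lcoset a K" "y = lcoset b K" using x y unfolding cosets_def by auto
  have "?E\<^sup>*\<^sup>* (lcoset 0 K) x" "?E\<^sup>*\<^sup>* (lcoset 0 K) y" using H ab unfolding H_def by auto
  then show ?thesis using rt_sym_gen[of "rc_edge K S", OF symE] by (meson rtranclp_trans)
qed

lemma nbr_finite:
  fixes K :: "'g::topological_group_add set"
  assumes gp: "generating_pair K S"
  shows "finite {y. rc_edge K S x y}"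
proof (cases "x \<in> cosets K")
  case False then show ?thesis using edge_cosets by (metis (no_types) Collect_empty_eq finite.emptyI)
next
  case True
  then obtain g where g: "x = lcoset g K" unfolding cosets_def by auto
  have sub: "is_subgroup K" "open K" "compact K" "finite S" using gp unfolding generating_pair_def by auto
  have "{y. rc_edge K S x y} \<subseteq> (\<Union>s\<in>S. (\<lambda>z. lcoset z K) ` ((\<lambda>k. g + k + s) ` K))"
  proof
    fix y assume "y \<in> {y. rc_edge K S x y}"
    then obtain h s where hs: "s \<in> S" "x = lcoset h K" "y = lcoset (h + s) K"
      unfolding rc_edge_def by auto
    have "h \<in> lcoset g K" using hs g lcoset_mem[OF sub(1)] by metis
    then obtain k where "k \<in> K" "h = g + k" unfolding lcoset_def by auto
    then show "y \<in> (\<Union>s\<in>S. (\<lambda>z. lcoset z K) ` ((\<lambda>k. g + k + s) ` K))" using hs by blast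
  qed
  moreover have "finite (\<Union>s\<in>S. (\<lambda>z. lcoset z K) ` ((\<lambda>k. g + k + s) ` K))"
    using sub by (intro finite_UN_I finite_cosets_compact compact_continuous_image continuous_intros) auto
  ultimately show ?thesis using finite_subset by blast
qed


lemma compact_Union_cosets:
  fixes K :: "'g::topological_group_add set"
  assumes "finite A" "A \<subseteq> cosets K" "compact K" shows "compact (\<Union>A)"
proof (rule compact_Union[OF assms(1)])
  fix T assume "T \<in> A"
  then obtain g where "T = lcoset g K" using assms(2) unfolding cosets_def by auto
  then show "compact T" using compact_lcoset[OF assms(3)] by simp
qed

theorem lemma4p3:
  fixes K S :: "'g::{topological_group_add,t2_space} set"
  assumes "tdlc TYPE('g)"
    and "compactly_generated TYPE('g)"
    and "generating_pair K S"
    and "\<exists>B. almost_invariant K B \<and> proper_set K B"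
  shows "num_ends (cosets K) (rc_edge K S) > 1"
proof -
  have gp: "generating_pair K S" by fact
  have sub: "is_subgroup K" "open K" "compact K" "finite S" using gp unfolding generating_pair_def by auto
  obtain B where B: "almost_invariant K B" "proper_set K B" using assms(4) by auto
  have BV: "B \<subseteq> cosets K" and Binv: "\<And>k. k \<in> K \<Longrightarrow> set_act k B = B"
    and Bfin: "\<And>g. finite ((set_act g B - B) \<union> (B - set_act g B))"
    using B(1) unfolding almost_invariant_def by auto
  let ?V = "cosets K"
  let ?E = "rc_edge K S"
  have symE: "\<And>a b. ?E a b \<Longrightarrow> ?E b a" using edge_sym[OF gp] by blast
  define B' where "B' = {x \<in> ?V. \<exists>g. x = lcoset g K \<and> lcoset (-g) K \<in> B}"
  have key: "lcoset (-h) K \<in> B" if "lcoset g K = lcoset h K" "lcoset (-g) K \<in> B" for g h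
  proof -
    have "h \<in> lcoset g K" using that(1) lcoset_mem[OF sub(1)] by metis
    then obtain k where k: "k \<in> K" "h = g + k" unfolding lcoset_def by auto
    have "-k \<in> K" using k sub(1) unfolding is_subgroup_def by auto
    then have "act (-k) (lcoset (-g) K) \<in> B" using Binv[of "-k"] that(2) unfolding set_act_def by auto
    then show ?thesis using k by (simp add: act_lcoset minus_add)
  qed
  have memB': "lcoset h K \<in> B' \<longleftrightarrow> lcoset (-h) K \<in> B" for h
    unfolding B'_def cosets_def using key by blast
  have B'V: "B' \<subseteq> ?V" unfolding B'_def by auto
  define F where "F = {x \<in> B'. \<exists>y. ?E x y \<and> y \<notin> B'}"
  have FV: "F \<subseteq> ?V" using B'V unfolding F_def by auto
  have Ffin: "finite F"
  proof -
    define D where "D s = B - set_act s B" for s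
    have Dc: "compact (\<Union>(D s))" for s
    proof -
      have "finite (D s)" using Bfin[of s] unfolding D_def by auto
      moreover have "D s \<subseteq> ?V" using BV unfolding D_def by auto
      ultimately show ?thesis using compact_Union_cosets sub(3) by blast
    qed
    have "F \<subseteq> (\<Union>s\<in>S. (\<lambda>z. lcoset z K) ` (uminus ` \<Union>(D s)))"
    proof
      fix x assume "x \<in> F"
      then obtain y where xy: "x \<in> B'" "?E x y" "y \<notin> B'" unfolding F_def by auto
      then obtain h s where hs: "s \<in> S" "x = lcoset h K" "y = lcoset (h + s) K"
        unfolding rc_edge_def by auto
      have in1: "lcoset (-h) K \<in> B" using memB' xy hs by auto
      have in2: "lcoset (-s + -h) K \<notin> B" using memB' xy hs by (simp add: minus_add)
      have "lcoset (-h) K \<notin> set_act s B"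
      proof
        assume "lcoset (-h) K \<in> set_act s B"
        then obtain c where c: "c \<in> B" "lcoset (-h) K = act s c" unfolding set_act_def by auto
        have "act (-s) (lcoset (-h) K) = c" using c(2)
          unfolding act_def by (simp add: image_image add.assoc[symmetric])
        then show False using in2 c(1) by (simp add: act_lcoset)
      qed
      then have "lcoset (-h) K \<in> D s" using in1 unfolding D_def by auto
      then have "-h \<in> \<Union>(D s)" using lcoset_mem[OF sub(1)] by blast
      then have "h \<in> uminus ` \<Union>(D s)" by (metis add.inverse_inverse image_eqI)
      then show "x \<in> (\<Union>s\<in>S. (\<lambda>z. lcoset z K) ` (uminus ` \<Union>(D s)))" using hs by blast
    qed
    moreover have "finite (\<Union>s\<in>S. (\<lambda>z. lcoset z K) ` (uminus ` \<Union>(D s)))"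
      using sub Dc by (intro finite_UN_I finite_cosets_compact compact_continuous_image continuous_intros) auto
    ultimately show ?thesis using finite_subset by blast
  qed
  have B'inf: "infinite B'"
  proof
    assume fin: "finite B'"
    have "compact (\<Union>B')" using fin B'V compact_Union_cosets sub(3) by blast
    then have "finite ((\<lambda>z. lcoset z K) ` (uminus ` \<Union>B'))"
      using sub by (intro finite_cosets_compact compact_continuous_image continuous_intros) auto
    moreover have "B \<subseteq> (\<lambda>z. lcoset z K) ` (uminus ` \<Union>B')"
    proof
      fix x assume x: "x \<in> B"
      then obtain c where c: "x = lcoset c K" using BV unfolding cosets_def by auto
      have "lcoset (-c) K \<in> B'" using memB' x c by simp
      then have "-c \<in> \<Union>B'" using lcoset_mem[OF sub(1)] by blast
      then have "c \<in> uminus ` \<Union>B'" by (metis add.inverse_inverse image_eqI)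
      then show "x \<in> (\<lambda>z. lcoset z K) ` (uminus ` \<Union>B')" using c by blast
    qed
    ultimately show False using B(2) finite_subset unfolding proper_set_def by blast
  qed
  have B'cinf: "infinite (?V - B')"
  proof
    assume fin: "finite (?V - B')"
    have "compact (\<Union>(?V - B'))" using fin compact_Union_cosets[of "?V - B'" K] sub(3) by blast
    then have "finite ((\<lambda>z. lcoset z K) ` (uminus ` \<Union>(?V - B')))"
      using sub by (intro finite_cosets_compact compact_continuous_image continuous_intros) auto
    moreover have "?V - B \<subseteq> (\<lambda>z. lcoset z K) ` (uminus ` \<Union>(?V - B'))"
    proof
      fix x assume x: "x \<in> ?V - B"
      then obtain c where c: "x = lcoset c K" unfolding cosets_def by auto
      have "lcoset (-c) K \<in> ?V - B'" using memB' x c unfolding cosets_def by simp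
      then have "-c \<in> \<Union>(?V - B')" using lcoset_mem[OF sub(1)] by blast
      then have "c \<in> uminus ` \<Union>(?V - B')" by (metis add.inverse_inverse image_eqI)
      then show "x \<in> (\<lambda>z. lcoset z K) ` (uminus ` \<Union>(?V - B'))" using c by blast
    qed
    ultimately show False using B(2) finite_subset unfolding proper_set_def by blast
  qed
  have cross: "?E\<^sup>*\<^sup>* a b \<Longrightarrow> a \<in> B' \<Longrightarrow> b \<notin> B' \<Longrightarrow> F \<noteq> {}" for a b
  proof (induction rule: converse_rtranclp_induct)
    case base then show ?case by simp
  next
    case (step a c)
    then show ?case unfolding F_def by (cases "c \<in> B'") auto
  qed
  obtain v0 where v0: "v0 \<in> B'" using B'inf by (metis ex_in_conv finite.emptyI)
  obtain w0 where w0: "w0 \<in> ?V - B'" using B'cinf by (metis ex_in_conv finite.emptyI)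
  have Fne: "F \<noteq> {}" using cross[OF connected_graph[OF gp] v0] v0 w0 B'V by auto
  then obtain f0 where f0: "f0 \<in> F" by auto
  define R where "R a b \<longleftrightarrow> a \<in> ?V - F \<and> b \<in> ?V - F \<and> ?E a b" for a b
  have symR: "\<And>a b. R a b \<Longrightarrow> R b a" unfolding R_def using symE by blast
  define N where "N = F \<union> (\<Union>f\<in>F. {y. ?E f y})"
  have Nfin: "finite N" unfolding N_def using Ffin nbr_finite[OF gp] by auto
  have reachN: "?E\<^sup>*\<^sup>* a b \<Longrightarrow> a \<in> ?V - F \<Longrightarrow> b \<in> F \<Longrightarrow> \<exists>n\<in>N - F. R\<^sup>*\<^sup>* a n" for a b
  proof (induction rule: converse_rtranclp_induct)
    case base then show ?case by simp
  next
    case (step a c)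
    show ?case
    proof (cases "c \<in> F")
      case True
      then have "a \<in> N" using symE[OF step(1)] unfolding N_def by auto
      then show ?thesis using step(4) by auto
    next
      case False
      then have "c \<in> ?V - F" using edge_cosets[OF step(1)] by auto
      then obtain n where "n \<in> N - F" "R\<^sup>*\<^sup>* c n" using step by auto
      moreover have "R a c" unfolding R_def using step(1,4) \<open>c \<in> ?V - F\<close> by auto
      ultimately show ?thesis by (meson converse_rtranclp_into_rtranclp)
    qed
  qed
  have cover: "v \<in> ?V - F \<Longrightarrow> \<exists>n\<in>N - F. R\<^sup>*\<^sup>* n v" for v
  proof -
    assume v: "v \<in> ?V - F"
    obtain n where "n \<in> N - F" "R\<^sup>*\<^sup>* v n"
      using reachN[OF connected_graph[OF gp, of v f0] v f0] v f0 FV by auto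
    then show ?thesis using rt_sym_gen[of R, OF symR] by blast
  qed
  have stay: "R\<^sup>*\<^sup>* a b \<Longrightarrow> a \<in> B' \<Longrightarrow> b \<in> B'" for a b
  proof (induction rule: rtranclp_induct)
    case base then show ?case .
  next
    case (step b c) then show ?case unfolding R_def F_def by auto
  qed
  define comp where "comp n = {w. R\<^sup>*\<^sup>* n w}" for n
  have infcomp: "\<exists>n\<in>N - F. infinite (comp n) \<and> comp n \<inter> X \<noteq> {}"
    if X: "X \<subseteq> ?V - F" "infinite X" for X
  proof (rule ccontr)
    assume "\<not> ?thesis"
    then have h: "\<And>n. n \<in> N - F \<Longrightarrow> finite (comp n \<inter> X)" by auto
    have "X \<subseteq> (\<Union>n\<in>N - F. comp n \<inter> X)" using cover X(1) unfolding comp_def by blast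
    moreover have "finite (\<Union>n\<in>N - F. comp n \<inter> X)" using Nfin h by (intro finite_UN_I) auto
    ultimately show False using X(2) finite_subset by blast
  qed
  obtain n1 where n1: "n1 \<in> N - F" "infinite (comp n1)" "comp n1 \<inter> (B' - F) \<noteq> {}"
    using infcomp[of "B' - F"] B'V B'inf Ffin by auto
  obtain n2 where n2: "n2 \<in> N - F" "infinite (comp n2)" "comp n2 \<inter> (?V - B') \<noteq> {}"
    using infcomp[of "?V - B'"] B'cinf unfolding F_def by auto
  have n1V: "n1 \<in> ?V" and n2V: "n2 \<in> ?V" using n1 n2 unfolding N_def using FV edge_cosets by blast+
  have ne: "comp n1 \<noteq> comp n2"
  proof
    assume eq: "comp n1 = comp n2"
    obtain v1 where v1: "R\<^sup>*\<^sup>* n1 v1" "v1 \<in> B'" using n1(3) unfolding comp_def by auto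
    obtain v2 where v2: "R\<^sup>*\<^sup>* n1 v2" "v2 \<notin> B'" using n2(3) eq unfolding comp_def by auto
    have "R\<^sup>*\<^sup>* v1 n1" using rt_sym_gen[of R, OF symR] v1(1) by blast
    then have "n1 \<in> B'" using stay v1(2) by blast
    then show False using stay v2 by blast
  qed
  have R_eq: "R = (\<lambda>a b. a \<in> ?V - F \<and> b \<in> ?V - F \<and> ?E a b)" unfolding R_def by auto
  have c1: "comp n1 \<in> {C \<in> comps_after_removal ?V ?E F. infinite C}"
    using n1 n1V unfolding comps_after_removal_def comp_def R_eq by auto
  have c2: "comp n2 \<in> {C \<in> comps_after_removal ?V ?E F. infinite C}"
    using n2 n2V unfolding comps_after_removal_def comp_def R_eq by auto
  have two: "ecard {C \<in> comps_after_removal ?V ?E F. infinite C} \<ge> 2"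
  proof (cases "finite {C \<in> comps_after_removal ?V ?E F. infinite C}")
    case True
    have "{comp n1, comp n2} \<subseteq> {C \<in> comps_after_removal ?V ?E F. infinite C}" using c1 c2 by auto
    then have "card {comp n1, comp n2} \<le> card {C \<in> comps_after_removal ?V ?E F. infinite C}"
      using True card_mono by blast
    then have "2 \<le> card {C \<in> comps_after_removal ?V ?E F. infinite C}" using ne by simp
    then show ?thesis using True unfolding ecard_def by (simp add: numeral_eq_enat)
  next
    case False then show ?thesis unfolding ecard_def by simp
  qed
  have "ecard {C \<in> comps_after_removal ?V ?E F. infinite C} \<le> num_ends ?V ?E"
    unfolding num_ends_def using Ffin FV by (intro SUP_upper) auto
  moreover have "(1::enat) < 2" by (simp add: one_enat_def numeral_eq_enat)
  ultimately show ?thesis using two by (meson order_less_le_trans)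
qed

end
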